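(* Assume the standing setting described in the context, with $\varepsilon$ fixed (and, in case (b), small enough that Lemma 1 below applies). Fix $\alpha>1$ and let $\delta>0$, $c_0,c_1,c_2>0$ and $a_1(\alpha)>0$ be such that simultaneously: (L1) for every solution $x$ of (S) and every $t\ge0$ with $\|x_t\|_h\le\delta$, $\frac{d}{dt}v(t,x_t)\le-c_0\|x(t)\|^{\gamma+\mu-1}-c_1\|x(t-h)\|^{\gamma+\mu-1}-c_2\int_{-h}^0\|x(t+\theta)\|^{\gamma+\mu-1}d\theta$; and (L2) for all $t\ge0$ and all $\varphi\in S_\alpha$ with $\|\varphi\|_h\le\delta$, $v(t,\varphi)\ge a_1(\alpha)\|\varphi(0)\|^\gamma+\mathrm w_1\int_{-h}^0\|\varphi(\theta)\|^{\gamma+\mu-1}d\theta$. Let $b_2=(\beta m+\mathrm w_1+h\mathrm w_2)h$, $b_3=\beta p(\hat bh+\omega(\varepsilon)/\varepsilon)$, and let $\Delta>0$ be a positive root of $$\alpha_1\Delta^\gamma+b_2\Delta^{\gamma+\mu-1}+b_3\Delta^{\gamma+\sigma-1}=a_1(\alpha)\delta^\gamma .$$ Then every initial function $\varphi\in C_{[-h,0]}$ with $\|\varphi\|_h<\Delta$ belongs to the region of attraction of the trivial solution of (S): $x(t,\varphi)\to0$ as $t\to\infty$. Moreover, for such $\varphi$, $\|x_t\|_h\le\delta$ for all $t\ge0$.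
   Context: Standing setting. Fix $n\ge1$ and a delay $h>0$. $\|\cdot\|$ is the Euclidean norm on $\mathbb R^n$ (and the induced operator norm on matrices). $C_{[-h,0]}$ is the space of continuous $\varphi:[-h,0]\to\mathbb R^n$ with norm $\|\varphi\|_h=\max_{\theta\in[-h,0]}\|\varphi(\theta)\|$. Consider system (S): $\dot x(t)=f(x(t),x(t-h))+B(t)Q(x(t),x(t-h))$, $t\ge0$, with initial function $\varphi\in C_{[-h,0]}$; $x(t,\varphi)$ denotes its solution and $x_t\in C_{[-h,0]}$ is the state $x_t(\theta)=x(t+\theta)$, $\theta\in[-h,0]$. Assumptions: (i) $f:\mathbb R^n\times\mathbb R^n\to\mathbb R^n$ is Lipschitz, continuously differentiable in both arguments, and homogeneous of degree $\mu>1$: $f(c\mathrm x_1,c\mathrm x_2)=c^\mu f(\mathrm x_1,\mathrm x_2)$ for all $c>0$; constants $m_1,m_2,\eta_{11},\eta_{12}\ge0$ are such that $\|f(\mathrm x_1,\mathrm x_2)\|\le m_1\|\mathrm x_1\|^\mu+m_2\|\mathrm x_2\|^\mu$ and $\|\partial f/\partial \mathrm x_1(\mathrm x_1,\mathrm x_2)\|\le \eta_{11}\|\mathrm x_1\|^{\mu-1}+\eta_{12}\|\mathrm x_2\|^{\mu-1}$. (ii) $B:[0,\infty)\to\mathbb R^{n\times n}$ is continuous with $\|B(t)\|\le\hat b$ for all $t$. (iii) $Q:\mathbb R^n\times\mathbb R^n\to\mathbb R^n$ is continuously differentiable and, for some $\sigma>1$ and constants $p_1,p_2,q_{jk}\ge0$,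 $\|Q(\mathrm x_1,\mathrm x_2)\|\le p_1\|\mathrm x_1\|^\sigma+p_2\|\mathrm x_2\|^\sigma$ and $\|\partial Q/\partial\mathrm x_j(\mathrm x_1,\mathrm x_2)\|\le q_{j1}\|\mathrm x_1\|^{\sigma-1}+q_{j2}\|\mathrm x_2\|^{\sigma-1}$, $j=1,2$. (iv) The delay-free system $\dot x=f(x,x)$ is asymptotically stable, and $V:\mathbb R^n\to\mathbb R$ is a positive definite, twice continuously differentiable function, homogeneous of degree $\gamma\ge2$, with constants $\mathrm w,\alpha_0,\alpha_1,\beta,\psi>0$ such that $(\partial V/\partial\mathrm x)^T f(\mathrm x,\mathrm x)\le-\mathrm w\|\mathrm x\|^{\gamma+\mu-1}$, $\alpha_0\|\mathrm x\|^\gamma\le V(\mathrm x)\le\alpha_1\|\mathrm x\|^\gamma$, $\|\partial V/\partial\mathrm x\|\le\beta\|\mathrm x\|^{\gamma-1}$, $\|\partial^2V/\partial\mathrm x^2\|\le\psi\|\mathrm x\|^{\gamma-2}$. Perturbation classes: case (a): $\int_0^tB(s)\,ds$ is bounded on $t\ge0$ and $\sigma>(\mu+1)/2$; case (b): $\frac1T\int_t^{t+T}B(s)\,ds\to0$ as $T\to+\infty$ uniformly in $t\ge0$, and $\sigma\ge\mu$. Define $L(t,\varepsilon)=\int_0^{t+h}e^{-\varepsilon(t+h-s)}B(s)\,ds$, where $\varepsilon=0$ in case (a) and $\varepsilon>0$ is a parameter in case (b). In case (b), $\omega(\varepsilon):=\sup_{t\ge0}\varepsilon\|L(t,\varepsilon)\|$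 is finite and $\omega(\varepsilon)\to0$ as $\varepsilon\to0$. In case (a) let $l_0>0$ with $\|L(t,0)\|\le l_0$ for all $t\ge0$, and throughout read $\omega(\varepsilon)$ as $0$ and $\omega(\varepsilon)/\varepsilon$ as $l_0$. Fix $\mathrm w_1,\mathrm w_2>0$ with $\mathrm w_0:=\mathrm w-\mathrm w_1-h\mathrm w_2>0$. The functional $v:[0,\infty)\times C_{[-h,0]}\to\mathbb R$ is $v(t,\varphi)=V(\varphi(0))+\Big(\frac{\partial V}{\partial\mathrm x}(\varphi(0))\Big)^T\Big(\int_{-h}^0\big(f(\varphi(0),\varphi(\theta))+B(t+\theta+h)Q(\varphi(0),\varphi(\theta))\big)d\theta-L(t,\varepsilon)Q(\varphi(0),\varphi(0))\Big)+\int_{-h}^0(\mathrm w_1+(h+\theta)\mathrm w_2)\|\varphi(\theta)\|^{\gamma+\mu-1}d\theta.$ For $\alpha>1$, $S_\alpha=\{\varphi\in C_{[-h,0]}:\|\varphi(\theta)\|\le\alpha\|\varphi(0)\|\ \forall\theta\in[-h,0]\}$. Notation: $m=m_1+m_2$, $p=p_1+p_2$. (Lemma 1: in case (a), and in case (b) for all sufficiently small $\varepsilon>0$, constants $\delta,c_0,c_1,c_2$ as in (L1) exist; Lemma 2: for each $\alpha>1$, constants $\delta,a_1(\alpha)$ as in (L2) exist.) *)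

theory Defs
  imports "HOL-Analysis.Analysis"
begin

(* Vectors of R^n are modelled by a Euclidean space type 'a; n x n matrices
  by bounded linear maps 'a \<Rightarrow>L 'a (whose norm is the induced operator norm).
  Functions on [-h,0] are functions real \<Rightarrow> 'a of which only the values on
  [-h,0] matter. *)

definition seg :: "(real \<Rightarrow> 'a) \<Rightarrow> real \<Rightarrow> real \<Rightarrow> 'a" where
  "seg x t = (\<lambda>\<theta>. x (t + \<theta>))"

definition hnorm :: "real \<Rightarrow> (real \<Rightarrow> 'a::real_normed_vector) \<Rightarrow> real" where
  "hnorm h \<phi> = Sup ((\<lambda>\<theta>. norm (\<phi> \<theta>)) ` {-h..0})"

definition Cfun :: "real \<Rightarrow> (real \<Rightarrow> 'a::real_normed_vector) \<Rightarrow> bool" where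
  "Cfun h \<phi> \<longleftrightarrow> continuous_on {-h..0} \<phi>"

definition in_S :: "real \<Rightarrow> real \<Rightarrow> (real \<Rightarrow> 'a::real_normed_vector) \<Rightarrow> bool" where
  "in_S h \<alpha> \<phi> \<longleftrightarrow> Cfun h \<phi> \<and> (\<forall>\<theta>\<in>{-h..0}. norm (\<phi> \<theta>) \<le> \<alpha> * norm (\<phi> 0))"

definition is_solution ::
  "real \<Rightarrow> ('a::euclidean_space \<Rightarrow> 'a \<Rightarrow> 'a) \<Rightarrow> (real \<Rightarrow> 'a \<Rightarrow>\<^sub>L 'a) \<Rightarrow> ('a \<Rightarrow> 'a \<Rightarrow> 'a)
    \<Rightarrow> (real \<Rightarrow> 'a) \<Rightarrow> (real \<Rightarrow> 'a) \<Rightarrow> bool" where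
  "is_solution h f B Q \<phi> x \<longleftrightarrow>
     (\<forall>\<theta>\<in>{-h..0}. x \<theta> = \<phi> \<theta>) \<and> continuous_on {-h..} x \<and>
     (\<forall>t\<ge>0. (x has_vector_derivative
                (f (x t) (x (t - h)) + blinfun_apply (B t) (Q (x t) (x (t - h)))))
             (at t within {0..}))"

definition Lmat :: "real \<Rightarrow> (real \<Rightarrow> 'a::euclidean_space \<Rightarrow>\<^sub>L 'a) \<Rightarrow> real \<Rightarrow> real \<Rightarrow> 'a \<Rightarrow>\<^sub>L 'a" where
  "Lmat h B \<epsilon> t = integral {0..t + h} (\<lambda>s. exp (- \<epsilon> * (t + h - s)) *\<^sub>R B s)"

definition omega :: "real \<Rightarrow> (real \<Rightarrow> 'a::euclidean_space \<Rightarrow>\<^sub>L 'a) \<Rightarrow> real \<Rightarrow> real" where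
  "omega h B \<epsilon> = Sup ((\<lambda>t. \<epsilon> * norm (Lmat h B \<epsilon> t)) ` {0..})"

(* The Lyapunov--Krasovskii functional v(t,\<phi>); gV is the gradient of V. *)
definition vfun ::
  "real \<Rightarrow> ('a::euclidean_space \<Rightarrow> 'a \<Rightarrow> 'a) \<Rightarrow> (real \<Rightarrow> 'a \<Rightarrow>\<^sub>L 'a) \<Rightarrow> ('a \<Rightarrow> 'a \<Rightarrow> 'a)
    \<Rightarrow> ('a \<Rightarrow> real) \<Rightarrow> ('a \<Rightarrow> 'a) \<Rightarrow> real \<Rightarrow> real \<Rightarrow> real \<Rightarrow> real \<Rightarrow> real
    \<Rightarrow> real \<Rightarrow> (real \<Rightarrow> 'a) \<Rightarrow> real" where
  "vfun h f B Q V gV w1 w2 \<gamma> \<mu> \<epsilon> t \<phi> =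
     V (\<phi> 0)
     + inner (gV (\<phi> 0))
         (integral {-h..0} (\<lambda>\<theta>. f (\<phi> 0) (\<phi> \<theta>) + blinfun_apply (B (t + \<theta> + h)) (Q (\<phi> 0) (\<phi> \<theta>)))
          - blinfun_apply (Lmat h B \<epsilon> t) (Q (\<phi> 0) (\<phi> 0)))
     + integral {-h..0} (\<lambda>\<theta>. (w1 + (h + \<theta>) * w2) * norm (\<phi> \<theta>) powr (\<gamma> + \<mu> - 1))"

definition C1_2 :: "('a::euclidean_space \<Rightarrow> 'a \<Rightarrow> 'b::euclidean_space)
    \<Rightarrow> ('a \<Rightarrow> 'a \<Rightarrow> 'a \<Rightarrow>\<^sub>L 'b) \<Rightarrow> ('a \<Rightarrow> 'a \<Rightarrow> 'a \<Rightarrow>\<^sub>L 'b) \<Rightarrow> bool" where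
  "C1_2 g F1 F2 \<longleftrightarrow>
     (\<forall>x1 x2. ((\<lambda>y. g y x2) has_derivative blinfun_apply (F1 x1 x2)) (at x1)) \<and>
     (\<forall>x1 x2. ((\<lambda>y. g x1 y) has_derivative blinfun_apply (F2 x1 x2)) (at x2)) \<and>
     continuous_on UNIV (\<lambda>z. F1 (fst z) (snd z)) \<and>
     continuous_on UNIV (\<lambda>z. F2 (fst z) (snd z))"

definition locally_lipschitz2 :: "('a::real_normed_vector \<Rightarrow> 'a \<Rightarrow> 'b::real_normed_vector) \<Rightarrow> bool" where
  "locally_lipschitz2 g \<longleftrightarrow>
     (\<forall>R>0. \<exists>K. \<forall>x1 x2 y1 y2. norm x1 \<le> R \<and> norm x2 \<le> R \<and> norm y1 \<le> R \<and> norm y2 \<le> R \<longrightarrow>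
        norm (g x1 x2 - g y1 y2) \<le> K * (norm (x1 - y1) + norm (x2 - y2)))"

definition ode_sol :: "('a::real_normed_vector \<Rightarrow> 'a) \<Rightarrow> (real \<Rightarrow> 'a) \<Rightarrow> bool" where
  "ode_sol F y \<longleftrightarrow> (\<forall>t\<ge>0. (y has_vector_derivative F (y t)) (at t within {0..}))"

definition asym_stable :: "('a::real_normed_vector \<Rightarrow> 'a) \<Rightarrow> bool" where
  "asym_stable F \<longleftrightarrow>
     (\<forall>e>0. \<exists>d>0. \<forall>y. ode_sol F y \<and> norm (y 0) < d \<longrightarrow> (\<forall>t\<ge>0. norm (y t) < e)) \<and>
     (\<exists>d>0. \<forall>y. ode_sol F y \<and> norm (y 0) < d \<longrightarrow> (y \<longlongrightarrow> 0) at_top)"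

end

theory Submission
  imports Defs
begin


lemma int_norm_le:
  fixes g :: "real \<Rightarrow> 'b::euclidean_space"
  assumes "a \<le> b" "\<And>x. x \<in> {a..b} \<Longrightarrow> norm (g x) \<le> C"
  shows "norm (integral {a..b} g) \<le> C * (b - a)"
proof (cases "g integrable_on {a..b}")
  case True
  have "norm (integral {a..b} g) \<le> C * Henstock_Kurzweil_Integration.content {a..b}"
    apply (rule has_integral_bound_real[where S="{}"])
    using assms True by (auto intro: order_trans[OF norm_ge_zero])
  then show ?thesis using assms(1) by simp
next
  case False
  have "0 \<le> C" using assms(2)[of a] assms(1) by (auto intro: order_trans[OF norm_ge_zero])
  then show ?thesis using False assms(1) by (simp add: not_integrable_integral)
qed

lemma int_nonneg':
  assumes "\<And>x. x \<in> S \<Longrightarrow> 0 \<le> (g x::real)"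
  shows "0 \<le> integral S g"
  using assms integral_nonneg not_integrable_integral by (metis order_refl)

lemma nonincr:
  fixes g :: "real \<Rightarrow> real"
  assumes "a \<le> b" "\<And>s. s \<in> {a..b} \<Longrightarrow> \<exists>D. (g has_real_derivative D) (at s within {a..b}) \<and> D \<le> 0"
  shows "g b \<le> g a"
proof -
  obtain D where D: "\<And>s. s \<in> {a..b} \<Longrightarrow> (g has_real_derivative D s) (at s within {a..b}) \<and> D s \<le> 0"
    using assms(2) by metis
  have "\<exists>x\<in>{a..b}. g b - g a = (\<lambda>k. D x * k) (b - a)"
    apply (rule mvt_very_simple[OF assms(1)])
    using D by (auto simp: has_field_derivative_def mult_commute_abs)
  then obtain x where "x \<in> {a..b}" "g b - g a = D x * (b - a)" by auto
  moreover have "D x * (b - a) \<le> 0" using D[OF \<open>x \<in> {a..b}\<close>] assms(1)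
    by (simp add: mult_nonpos_nonneg)
  ultimately show ?thesis by linarith
qed


lemma powr_le_r: "0 \<le> e \<Longrightarrow> norm (x::'b::real_normed_vector) \<le> r \<Longrightarrow> norm x powr e \<le> r powr e"
  by (simp add: powr_mono2)

lemma vbound:
  fixes f Q :: "'a::euclidean_space \<Rightarrow> 'a \<Rightarrow> 'a" and B :: "real \<Rightarrow> 'a \<Rightarrow>\<^sub>L 'a"
    and V :: "'a \<Rightarrow> real" and gV :: "'a \<Rightarrow> 'a"
  assumes hp: "h > 0" and r: "r \<ge> 0" and t: "t \<ge> 0" and psi: "\<forall>\<theta>\<in>{-h..0}. norm (\<psi> \<theta>) \<le> r"
    and fb: "\<And>x1 x2. norm (f x1 x2) \<le> m1 * norm x1 powr \<mu> + m2 * norm x2 powr \<mu>"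
    and m: "m1 \<ge> 0" "m2 \<ge> 0" "\<mu> > 1"
    and Bb: "\<And>t. t \<ge> 0 \<Longrightarrow> norm (B t) \<le> bh"
    and Qb: "\<And>x1 x2. norm (Q x1 x2) \<le> p1 * norm x1 powr \<sigma> + p2 * norm x2 powr \<sigma>"
    and p: "p1 \<ge> 0" "p2 \<ge> 0" "\<sigma> > 1"
    and V0: "\<And>x. 0 \<le> V x" and V1: "\<And>x. V x \<le> \<alpha>1 * norm x powr \<gamma>"
    and gVb: "\<And>x. norm (gV x) \<le> \<beta> * norm x powr (\<gamma> - 1)"
    and be: "\<beta> > 0" and ga: "\<gamma> \<ge> 2" and al: "\<alpha>1 > 0"
    and w: "w1 > 0" "w2 > 0"
    and L: "norm (Lmat h B \<epsilon> t) \<le> \<kappa>"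
  shows "\<bar>vfun h f B Q V gV w1 w2 \<gamma> \<mu> \<epsilon> t \<psi>\<bar> \<le> \<alpha>1 * r powr \<gamma>
        + ((\<beta> * (m1 + m2) + w1 + h * w2) * h) * r powr (\<gamma> + \<mu> - 1)
        + (\<beta> * (p1 + p2) * (bh * h + \<kappa>)) * r powr (\<gamma> + \<sigma> - 1)"
proof -
  define a where "a = \<psi> 0"
  have a: "norm a \<le> r" using psi hp unfolding a_def by auto
  have bh: "bh \<ge> 0" using Bb[of 0] norm_ge_zero by (meson order_trans order_refl)
  have ka: "\<kappa> \<ge> 0" using L norm_ge_zero order_trans by blast
  define I1 where "I1 = integral {-h..0} (\<lambda>\<theta>. f a (\<psi> \<theta>) + blinfun_apply (B (t + \<theta> + h)) (Q a (\<psi> \<theta>)))"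
  define LQ where "LQ = blinfun_apply (Lmat h B \<epsilon> t) (Q a a)"
  define W where "W = integral {-h..0} (\<lambda>\<theta>. (w1 + (h + \<theta>) * w2) * norm (\<psi> \<theta>) powr (\<gamma> + \<mu> - 1))"
  have v: "vfun h f B Q V gV w1 w2 \<gamma> \<mu> \<epsilon> t \<psi> = V a + inner (gV a) (I1 - LQ) + W"
    unfolding vfun_def a_def I1_def LQ_def W_def by simp
  have fa: "norm (f a y) \<le> (m1 + m2) * r powr \<mu>" if "norm y \<le> r" for y
  proof -
    have "m1 * norm a powr \<mu> \<le> m1 * r powr \<mu>" using powr_le_r[OF _ a, of \<mu>] m by (simp add: mult_left_mono)
    moreover have "m2 * norm y powr \<mu> \<le> m2 * r powr \<mu>" using powr_le_r[OF _ that, of \<mu>] m by (simp add: mult_left_mono)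
    ultimately show ?thesis using fb[of a y] by (simp add: algebra_simps)
  qed
  have qa: "norm (Q a y) \<le> (p1 + p2) * r powr \<sigma>" if "norm y \<le> r" for y
  proof -
    have "p1 * norm a powr \<sigma> \<le> p1 * r powr \<sigma>" using powr_le_r[OF _ a, of \<sigma>] p by (simp add: mult_left_mono)
    moreover have "p2 * norm y powr \<sigma> \<le> p2 * r powr \<sigma>" using powr_le_r[OF _ that, of \<sigma>] p by (simp add: mult_left_mono)
    ultimately show ?thesis using Qb[of a y] by (simp add: algebra_simps)
  qed
  have qa0: "0 \<le> (p1 + p2) * r powr \<sigma>" using p by simp
  have "norm I1 \<le> ((m1 + m2) * r powr \<mu> + bh * ((p1 + p2) * r powr \<sigma>)) * (0 - - h)"
    unfolding I1_def
  proof (rule int_norm_le)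
    fix \<theta> assume th: "\<theta> \<in> {-h..0}"
    have y: "norm (\<psi> \<theta>) \<le> r" using psi th by auto
    have "norm (blinfun_apply (B (t + \<theta> + h)) (Q a (\<psi> \<theta>))) \<le> norm (B (t + \<theta> + h)) * norm (Q a (\<psi> \<theta>))"
      by (rule norm_blinfun)
    also have "\<dots> \<le> bh * ((p1 + p2) * r powr \<sigma>)"
      apply (rule mult_mono) using Bb[of "t + \<theta> + h"] th t qa[OF y] bh by auto
    finally show "norm (f a (\<psi> \<theta>) + blinfun_apply (B (t + \<theta> + h)) (Q a (\<psi> \<theta>)))
        \<le> (m1 + m2) * r powr \<mu> + bh * ((p1 + p2) * r powr \<sigma>)"
      using fa[OF y] norm_triangle_ineq[of "f a (\<psi> \<theta>)" "blinfun_apply (B (t + \<theta> + h)) (Q a (\<psi> \<theta>))"] by linarith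
  qed (use hp in auto)
  hence I1b: "norm I1 \<le> ((m1 + m2) * r powr \<mu> + bh * ((p1 + p2) * r powr \<sigma>)) * h" by simp
  have "norm LQ \<le> norm (Lmat h B \<epsilon> t) * norm (Q a a)" unfolding LQ_def by (rule norm_blinfun)
  also have "\<dots> \<le> \<kappa> * ((p1 + p2) * r powr \<sigma>)"
    apply (rule mult_mono) using L qa[OF a] ka by auto
  finally have LQb: "norm LQ \<le> \<kappa> * ((p1 + p2) * r powr \<sigma>)" .
  define E where "E = ((m1 + m2) * r powr \<mu> + bh * ((p1 + p2) * r powr \<sigma>)) * h + \<kappa> * ((p1 + p2) * r powr \<sigma>)"
  have Eb: "norm (I1 - LQ) \<le> E" unfolding E_def using I1b LQb norm_triangle_ineq4[of I1 LQ] by linarith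
  have gb: "norm (gV a) \<le> \<beta> * r powr (\<gamma> - 1)"
    using gVb[of a] powr_le_r[OF _ a, of "\<gamma> - 1"] ga be
    by (meson diff_ge_0_iff_ge dual_order.trans mult_left_mono less_imp_le one_le_numeral order_trans)
  have "\<bar>inner (gV a) (I1 - LQ)\<bar> \<le> norm (gV a) * norm (I1 - LQ)" by (rule Cauchy_Schwarz_ineq2)
  also have "\<dots> \<le> (\<beta> * r powr (\<gamma> - 1)) * E"
    apply (rule mult_mono) using gb Eb be by auto
  also have "\<dots> = (\<beta> * (m1 + m2) * h) * r powr (\<gamma> + \<mu> - 1) + (\<beta> * (p1 + p2) * (bh * h + \<kappa>)) * r powr (\<gamma> + \<sigma> - 1)"
  proof -
    have e1: "r powr (\<gamma> + \<mu> - 1) = r powr (\<gamma> - 1) * r powr \<mu>" by (simp add: powr_add[symmetric] algebra_simps)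
    have e2: "r powr (\<gamma> + \<sigma> - 1) = r powr (\<gamma> - 1) * r powr \<sigma>" by (simp add: powr_add[symmetric] algebra_simps)
    show ?thesis unfolding E_def e1 e2 by (simp add: algebra_simps)
  qed
  finally have IB: "\<bar>inner (gV a) (I1 - LQ)\<bar> \<le> (\<beta> * (m1 + m2) * h) * r powr (\<gamma> + \<mu> - 1) + (\<beta> * (p1 + p2) * (bh * h + \<kappa>)) * r powr (\<gamma> + \<sigma> - 1)" .
  have W0: "0 \<le> W" unfolding W_def
    by (rule int_nonneg') (use w in auto)
  have "norm W \<le> ((w1 + h * w2) * r powr (\<gamma> + \<mu> - 1)) * (0 - - h)" unfolding W_def
  proof (rule int_norm_le)
    fix \<theta> assume th: "\<theta> \<in> {-h..0}"
    have y: "norm (\<psi> \<theta>) \<le> r" using psi th by auto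
    have "0 \<le> w1 + (h + \<theta>) * w2" using th w by auto
    moreover have "w1 + (h + \<theta>) * w2 \<le> w1 + h * w2" using th w by (auto simp: mult_right_mono)
    moreover have "norm (\<psi> \<theta>) powr (\<gamma> + \<mu> - 1) \<le> r powr (\<gamma> + \<mu> - 1)" using powr_le_r[OF _ y] ga m by simp
    ultimately show "norm ((w1 + (h + \<theta>) * w2) * norm (\<psi> \<theta>) powr (\<gamma> + \<mu> - 1)) \<le> (w1 + h * w2) * r powr (\<gamma> + \<mu> - 1)"
      by (simp add: mult_mono)
  qed (use hp in auto)
  hence Wb: "W \<le> (w1 + h * w2) * h * r powr (\<gamma> + \<mu> - 1)" using W0 by (simp add: algebra_simps)
  have Va: "V a \<le> \<alpha>1 * r powr \<gamma>"
    using V1[of a] powr_le_r[OF _ a, of \<gamma>] ga al by (meson dual_order.trans mult_left_mono less_imp_le order_trans zero_le_numeral)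
  have rp: "0 \<le> r powr (\<gamma> + \<mu> - 1)" "0 \<le> r powr \<gamma>" "0 \<le> r powr (\<gamma> + \<sigma> - 1)" by auto
  have "(\<beta> * (m1 + m2) + w1 + h * w2) * h * r powr (\<gamma> + \<mu> - 1) = (\<beta> * (m1 + m2) * h) * r powr (\<gamma> + \<mu> - 1) + (w1 + h * w2) * h * r powr (\<gamma> + \<mu> - 1)"
    by (simp add: algebra_simps)
  moreover have "0 \<le> (w1 + h * w2) * h * r powr (\<gamma> + \<mu> - 1)" using w hp by simp
  moreover have "0 \<le> \<alpha>1 * r powr \<gamma>" using al by simp
  ultimately show ?thesis unfolding v using V0[of a] IB W0 Wb Va by (simp add: abs_le_iff)
qed


lemma Lmat_bound:
  fixes B :: "real \<Rightarrow> 'a::euclidean_space \<Rightarrow>\<^sub>L 'a"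
  assumes e: "\<epsilon> > 0" and hp: "h > 0" and t: "t \<ge> 0" and Bb: "\<And>t. t \<ge> 0 \<Longrightarrow> norm (B t) \<le> bh"
  shows "norm (Lmat h B \<epsilon> t) \<le> bh / \<epsilon>"
proof -
  define T where "T = t + h"
  have T: "T \<ge> 0" using t hp T_def by simp
  have bh: "bh \<ge> 0" using Bb[of 0] norm_ge_zero by (meson order_trans order_refl)
  have L: "Lmat h B \<epsilon> t = integral {0..T} (\<lambda>s. exp (- \<epsilon> * (T - s)) *\<^sub>R B s)"
    unfolding Lmat_def T_def by simp
  define F where "F s = bh * exp (- \<epsilon> * (T - s)) / \<epsilon>" for s
  have der: "(F has_vector_derivative bh * exp (- \<epsilon> * (T - s))) (at s within {0..T})" for s
    unfolding F_def has_real_derivative_iff_has_vector_derivative[symmetric]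
    using e by (auto intro!: derivative_eq_intros simp: field_simps)
  have hi: "((\<lambda>s. bh * exp (- \<epsilon> * (T - s))) has_integral F T - F 0) {0..T}"
    by (rule fundamental_theorem_of_calculus[OF T]) (use der in auto)
  have FT: "F T - F 0 \<le> bh / \<epsilon>" unfolding F_def using e bh
    by (simp add: divide_right_mono)
  show ?thesis
  proof (cases "(\<lambda>s. exp (- \<epsilon> * (T - s)) *\<^sub>R B s) integrable_on {0..T}")
    case True
    have "norm (integral {0..T} (\<lambda>s. exp (- \<epsilon> * (T - s)) *\<^sub>R B s)) \<le> integral {0..T} (\<lambda>s. bh * exp (- \<epsilon> * (T - s)))"
      apply (rule integral_norm_bound_integral[OF True])
      using hi Bb by (auto simp: mult_commute_abs mult_left_mono)
    also have "\<dots> = F T - F 0" using integral_unique[OF hi] by simp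
    finally show ?thesis using L FT by simp
  next
    case False
    then show ?thesis using L bh e by (simp add: not_integrable_integral)
  qed
qed


lemma hn_le:
  assumes "h > 0" "\<And>\<theta>. \<theta> \<in> {-h..0} \<Longrightarrow> norm (\<psi> \<theta>) \<le> c"
  shows "hnorm h \<psi> \<le> c"
  unfolding hnorm_def using assms by (intro cSup_least) auto

lemma hn_ge:
  assumes "Cfun h \<psi>" "\<theta> \<in> {-h..0}"
  shows "norm (\<psi> \<theta>) \<le> hnorm h \<psi>"
proof -
  have "compact ((\<lambda>\<theta>. norm (\<psi> \<theta>)) ` {-h..0})"
    apply (rule compact_continuous_image)
    using assms(1) unfolding Cfun_def by (auto intro: continuous_intros)
  hence "bdd_above ((\<lambda>\<theta>. norm (\<psi> \<theta>)) ` {-h..0})"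
    by (meson bounded_imp_bdd_above compact_imp_bounded)
  thus ?thesis unfolding hnorm_def using assms(2) by (intro cSup_upper) auto
qed

theorem theorem2:
  fixes h :: real
    and f Q :: "'a::euclidean_space \<Rightarrow> 'a \<Rightarrow> 'a"
    and F1 F2 Q1 Q2 :: "'a \<Rightarrow> 'a \<Rightarrow> 'a \<Rightarrow>\<^sub>L 'a"
    and B :: "real \<Rightarrow> 'a \<Rightarrow>\<^sub>L 'a"
    and V :: "'a \<Rightarrow> real" and gV :: "'a \<Rightarrow> 'a" and HV :: "'a \<Rightarrow> 'a \<Rightarrow>\<^sub>L 'a"
    and \<mu> \<sigma> \<gamma> m1 m2 \<eta>11 \<eta>12 p1 p2 q11 q12 q21 q22 bh :: real
    and w \<alpha>0 \<alpha>1 \<beta> \<psi> w1 w2 \<epsilon> \<kappa> :: real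
    and \<alpha> \<delta> c0 c1 c2 a1 \<Delta> :: real
  assumes h_pos: "h > 0"
    and f_lip: "locally_lipschitz2 f"
    and f_C1: "C1_2 f F1 F2"
    and \<mu>_gt: "\<mu> > 1"
    and f_hom: "\<And>c x1 x2. c > 0 \<Longrightarrow> f (c *\<^sub>R x1) (c *\<^sub>R x2) = (c powr \<mu>) *\<^sub>R f x1 x2"
    and f_consts: "m1 \<ge> 0" "m2 \<ge> 0" "\<eta>11 \<ge> 0" "\<eta>12 \<ge> 0"
    and f_bound: "\<And>x1 x2. norm (f x1 x2) \<le> m1 * norm x1 powr \<mu> + m2 * norm x2 powr \<mu>"
    and F1_bound: "\<And>x1 x2. norm (F1 x1 x2) \<le> \<eta>11 * norm x1 powr (\<mu> - 1) + \<eta>12 * norm x2 powr (\<mu> - 1)"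
    and B_cont: "continuous_on {0..} B"
    and B_bound: "\<And>t. t \<ge> 0 \<Longrightarrow> norm (B t) \<le> bh"
    and Q_C1: "C1_2 Q Q1 Q2"
    and \<sigma>_gt: "\<sigma> > 1"
    and Q_consts: "p1 \<ge> 0" "p2 \<ge> 0" "q11 \<ge> 0" "q12 \<ge> 0" "q21 \<ge> 0" "q22 \<ge> 0"
    and Q_bound: "\<And>x1 x2. norm (Q x1 x2) \<le> p1 * norm x1 powr \<sigma> + p2 * norm x2 powr \<sigma>"
    and Q1_bound: "\<And>x1 x2. norm (Q1 x1 x2) \<le> q11 * norm x1 powr (\<sigma> - 1) + q12 * norm x2 powr (\<sigma> - 1)"
    and Q2_bound: "\<And>x1 x2. norm (Q2 x1 x2) \<le> q21 * norm x1 powr (\<sigma> - 1) + q22 * norm x2 powr (\<sigma> - 1)"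
    and delayfree_stable: "asym_stable (\<lambda>x. f x x)"
    and V_posdef: "V 0 = 0" "\<And>x. x \<noteq> 0 \<Longrightarrow> V x > 0"
    and V_deriv: "\<And>x. (V has_derivative (\<lambda>y. inner (gV x) y)) (at x)"
    and gV_deriv: "\<And>x. (gV has_derivative blinfun_apply (HV x)) (at x)"
    and HV_cont: "continuous_on UNIV HV"
    and \<gamma>_ge: "\<gamma> \<ge> 2"
    and V_hom: "\<And>c x. c > 0 \<Longrightarrow> V (c *\<^sub>R x) = c powr \<gamma> * V x"
    and V_consts: "w > 0" "\<alpha>0 > 0" "\<alpha>1 > 0" "\<beta> > 0" "\<psi> > 0"
    and V_decr: "\<And>x. inner (gV x) (f x x) \<le> - w * norm x powr (\<gamma> + \<mu> - 1)"
    and V_bounds: "\<And>x. \<alpha>0 * norm x powr \<gamma> \<le> V x" "\<And>x. V x \<le> \<alpha>1 * norm x powr \<gamma>"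
    and gV_bound: "\<And>x. norm (gV x) \<le> \<beta> * norm x powr (\<gamma> - 1)"
    and HV_bound: "\<And>x. norm (HV x) \<le> \<psi> * (if \<gamma> = 2 then 1 else norm x powr (\<gamma> - 2))"
    and cases_ab:
      "(\<epsilon> = 0 \<and> (\<exists>M. \<forall>t\<ge>0. norm (integral {0..t} B) \<le> M) \<and> \<sigma> > (\<mu> + 1) / 2 \<and>
          \<kappa> > 0 \<and> (\<forall>t\<ge>0. norm (Lmat h B 0 t) \<le> \<kappa>))
       \<or> (\<epsilon> > 0 \<and> (\<forall>e>0. \<exists>T0. \<forall>T\<ge>T0. \<forall>t\<ge>0. norm ((1 / T) *\<^sub>R integral {t..t + T} B) \<le> e) \<and>
          \<sigma> \<ge> \<mu> \<and> \<kappa> = omega h B \<epsilon> / \<epsilon>)"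
    and w12: "w1 > 0" "w2 > 0" "w - w1 - h * w2 > 0"
    and lemma_consts: "\<alpha> > 1" "\<delta> > 0" "c0 > 0" "c1 > 0" "c2 > 0" "a1 > 0"
    and L1: "\<And>\<phi> x t. Cfun h \<phi> \<Longrightarrow> is_solution h f B Q \<phi> x \<Longrightarrow> t \<ge> 0 \<Longrightarrow> hnorm h (seg x t) \<le> \<delta> \<Longrightarrow>
        \<exists>D. ((\<lambda>\<tau>. vfun h f B Q V gV w1 w2 \<gamma> \<mu> \<epsilon> \<tau> (seg x \<tau>)) has_real_derivative D) (at t within {0..})
           \<and> D \<le> - c0 * norm (x t) powr (\<gamma> + \<mu> - 1) - c1 * norm (x (t - h)) powr (\<gamma> + \<mu> - 1)
                - c2 * integral {-h..0} (\<lambda>\<theta>. norm (x (t + \<theta>)) powr (\<gamma> + \<mu> - 1))"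
    and L2: "\<And>t \<phi>. t \<ge> 0 \<Longrightarrow> in_S h \<alpha> \<phi> \<Longrightarrow> hnorm h \<phi> \<le> \<delta> \<Longrightarrow>
        vfun h f B Q V gV w1 w2 \<gamma> \<mu> \<epsilon> t \<phi>
          \<ge> a1 * norm (\<phi> 0) powr \<gamma> + w1 * integral {-h..0} (\<lambda>\<theta>. norm (\<phi> \<theta>) powr (\<gamma> + \<mu> - 1))"
    and \<Delta>_pos: "\<Delta> > 0"
    and \<Delta>_root: "\<alpha>1 * \<Delta> powr \<gamma>
        + ((\<beta> * (m1 + m2) + w1 + h * w2) * h) * \<Delta> powr (\<gamma> + \<mu> - 1)
        + (\<beta> * (p1 + p2) * (bh * h + \<kappa>)) * \<Delta> powr (\<gamma> + \<sigma> - 1)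
        = a1 * \<delta> powr \<gamma>"
  shows "\<forall>\<phi> x. Cfun h \<phi> \<and> hnorm h \<phi> < \<Delta> \<and> is_solution h f B Q \<phi> x \<longrightarrow>
           (x \<longlongrightarrow> 0) at_top \<and> (\<forall>t\<ge>0. hnorm h (seg x t) \<le> \<delta>)"
proof (intro allI impI, elim conjE)
  fix \<phi> x
  assume C\<phi>: "Cfun h \<phi>" and h\<phi>: "hnorm h \<phi> < \<Delta>" and sol: "is_solution h f B Q \<phi> x"
  define p where "p = \<gamma> + \<mu> - 1"
  define q where "q = \<gamma> + \<sigma> - 1"
  define b2 where "b2 = (\<beta> * (m1 + m2) + w1 + h * w2) * h"
  define b3 where "b3 = \<beta> * (p1 + p2) * (bh * h + \<kappa>)"
  define G where "G r = \<alpha>1 * r powr \<gamma> + b2 * r powr p + b3 * r powr q" for r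
  have p_pos: "p > 0" and q_pos: "q > 0" using \<gamma>_ge \<mu>_gt \<sigma>_gt by (auto simp: p_def q_def)
  have bh0: "bh \<ge> 0" using B_bound[of 0] norm_ge_zero by (meson order_trans order_refl)
  have LK: "norm (Lmat h B \<epsilon> t) \<le> \<kappa>" if "t \<ge> 0" for t
    using cases_ab
  proof
    assume "\<epsilon> = 0 \<and> (\<exists>M. \<forall>t\<ge>0. norm (integral {0..t} B) \<le> M) \<and> \<sigma> > (\<mu> + 1) / 2 \<and>
          \<kappa> > 0 \<and> (\<forall>t\<ge>0. norm (Lmat h B 0 t) \<le> \<kappa>)"
    then show ?thesis using that by auto
  next
    assume a: "\<epsilon> > 0 \<and> (\<forall>e>0. \<exists>T0. \<forall>T\<ge>T0. \<forall>t\<ge>0. norm ((1 / T) *\<^sub>R integral {t..t + T} B) \<le> e) \<and>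
          \<sigma> \<ge> \<mu> \<and> \<kappa> = omega h B \<epsilon> / \<epsilon>"
    hence e: "\<epsilon> > 0" by auto
    have bd: "bdd_above ((\<lambda>t. \<epsilon> * norm (Lmat h B \<epsilon> t)) ` {0..})"
    proof (rule bdd_aboveI2)
      fix s :: real assume "s \<in> {0..}"
      then show "\<epsilon> * norm (Lmat h B \<epsilon> s) \<le> bh"
        using Lmat_bound[OF e h_pos _ B_bound, of s] e by (auto simp: field_simps)
    qed
    have "\<epsilon> * norm (Lmat h B \<epsilon> t) \<le> omega h B \<epsilon>"
      unfolding omega_def using that by (intro cSup_upper[OF _ bd]) auto
    then show ?thesis using a by (simp add: field_simps)
  qed
  have ka0: "\<kappa> \<ge> 0" using LK[of 0] norm_ge_zero[of "Lmat h B \<epsilon> 0"] by linarith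
  have b2pos: "b2 > 0"
  proof -
    have "0 \<le> \<beta> * (m1 + m2)" using V_consts(4) f_consts(1,2) by simp
    hence "0 < \<beta> * (m1 + m2) + w1 + h * w2" using w12 h_pos by (simp add: add_nonneg_pos add_pos_pos)
    thus ?thesis unfolding b2_def using h_pos by simp
  qed
  have b3nn: "b3 \<ge> 0" unfolding b3_def using V_consts(4) Q_consts(1,2) bh0 ka0 h_pos by simp
  have VB: "\<bar>vfun h f B Q V gV w1 w2 \<gamma> \<mu> \<epsilon> t \<psi>\<bar> \<le> G r"
    if "t \<ge> 0" "r \<ge> 0" "\<forall>\<theta>\<in>{-h..0}. norm (\<psi> \<theta>) \<le> r" for t r \<psi>
  proof -
    have V0: "0 \<le> V y" for y using V_bounds(1)[of y] V_consts by (meson order_trans mult_nonneg_nonneg less_imp_le powr_ge_zero norm_ge_zero)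
    show ?thesis unfolding G_def b2_def b3_def p_def q_def
      by (rule vbound[OF h_pos that(2) that(1) that(3) f_bound f_consts(1,2) \<mu>_gt B_bound Q_bound Q_consts(1,2) \<sigma>_gt
            V0 V_bounds(2) gV_bound V_consts(4) \<gamma>_ge V_consts(3) w12(1,2) LK[OF that(1)]])
  qed
  have Gmono: "G r < G s" if "0 \<le> r" "r < s" for r s
  proof -
    have "r powr \<gamma> < s powr \<gamma>" using that \<gamma>_ge by (intro powr_less_mono2) auto
    moreover have "r powr p < s powr p" using that p_pos by (intro powr_less_mono2) auto
    moreover have "r powr q \<le> s powr q" using that q_pos by (intro powr_mono2) auto
    ultimately show ?thesis unfolding G_def using V_consts b2pos b3nn
      by (intro add_less_le_mono add_strict_mono mult_strict_left_mono mult_left_mono) auto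
  qed
  have GD: "G \<Delta> = a1 * \<delta> powr \<gamma>" using \<Delta>_root unfolding G_def b2_def b3_def p_def q_def by simp
  have Dd: "\<Delta> \<le> \<delta>"
  proof (rule ccontr)
    assume nD: "\<not> \<Delta> \<le> \<delta>"
    have "\<alpha>1 * \<delta> powr \<gamma> \<le> \<alpha>1 * \<Delta> powr \<gamma>"
      using nD lemma_consts(2) V_consts(3) \<gamma>_ge by (intro mult_left_mono powr_mono2) auto
    moreover have "0 < b2 * \<Delta> powr p" using b2pos \<Delta>_pos by simp
    moreover have "0 \<le> b3 * \<Delta> powr q" using b3nn by simp
    ultimately have "\<alpha>1 * \<delta> powr \<gamma> < a1 * \<delta> powr \<gamma>" using GD unfolding G_def by linarith
    hence a1gt: "\<alpha>1 < a1" using lemma_consts(2) by simp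
    define \<eta> where "\<eta> = a1 - \<alpha>1"
    have \<eta>: "\<eta> > 0" using a1gt \<eta>_def by simp
    have lim: "((\<lambda>c. b2 * c powr (\<mu> - 1) + b3 * c powr (\<sigma> - 1)) \<longlongrightarrow> 0) (at_right 0)"
    proof -
      have e0: "\<forall>\<^sub>F c in at_right (0::real). 0 \<le> c" using eventually_at_right_less[of "0::real"] by (rule eventually_mono) simp
      have "((\<lambda>c. c powr (\<mu> - 1)) \<longlongrightarrow> 0) (at_right (0::real))"
        by (rule tendsto_zero_powrI[OF _ tendsto_const e0]) (use \<mu>_gt in \<open>auto intro: tendsto_ident_at\<close>)
      moreover have "((\<lambda>c. c powr (\<sigma> - 1)) \<longlongrightarrow> 0) (at_right (0::real))"
        by (rule tendsto_zero_powrI[OF _ tendsto_const e0]) (use \<sigma>_gt in \<open>auto intro: tendsto_ident_at\<close>)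
      ultimately show ?thesis
        using tendsto_add[OF tendsto_mult[OF tendsto_const[of b2]] tendsto_mult[OF tendsto_const[of b3]]] by fastforce
    qed
    have "\<forall>\<^sub>F c in at_right (0::real). b2 * c powr (\<mu> - 1) + b3 * c powr (\<sigma> - 1) < \<eta>"
      using order_tendstoD(2)[OF lim \<eta>] .
    then obtain b where b: "b > 0" "\<And>y. 0 < y \<Longrightarrow> y < b \<Longrightarrow> b2 * y powr (\<mu> - 1) + b3 * y powr (\<sigma> - 1) < \<eta>"
      unfolding eventually_at_right_field by auto
    define c where "c = min (b / 2) \<delta>"
    have c: "0 < c" "c < b" "c \<le> \<delta>" using b lemma_consts(2) c_def by auto
    have small: "b2 * c powr (\<mu> - 1) + b3 * c powr (\<sigma> - 1) < \<eta>" using b(2) c by auto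
    obtain u :: 'a where u: "norm u = c" using vector_choose_size c(1) by (metis less_imp_le)
    define \<psi> where "\<psi> = (\<lambda>\<theta>::real. u)"
    have img: "(\<lambda>\<theta>. norm (\<psi> \<theta>)) ` {-h..0} = {c}" using h_pos u unfolding \<psi>_def by (auto intro!: image_eqI[where x=0])
    have hn: "hnorm h \<psi> = c" unfolding hnorm_def img by simp
    have inS: "in_S h \<alpha> \<psi>" unfolding in_S_def Cfun_def \<psi>_def using u c lemma_consts(1)
      by (auto intro: continuous_on_const)
    have "a1 * norm (\<psi> 0) powr \<gamma> + w1 * integral {-h..0} (\<lambda>\<theta>. norm (\<psi> \<theta>) powr (\<gamma> + \<mu> - 1))
          \<le> vfun h f B Q V gV w1 w2 \<gamma> \<mu> \<epsilon> 0 \<psi>"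
      using L2[of 0 \<psi>] inS hn c by simp
    moreover have "0 \<le> integral {-h..0} (\<lambda>\<theta>. norm (\<psi> \<theta>) powr (\<gamma> + \<mu> - 1))" by (rule int_nonneg') simp
    moreover have "vfun h f B Q V gV w1 w2 \<gamma> \<mu> \<epsilon> 0 \<psi> \<le> G c"
      using VB[of 0 c \<psi>] c u unfolding \<psi>_def by auto
    ultimately have le: "a1 * c powr \<gamma> \<le> G c" using w12(1) u unfolding \<psi>_def
      by (smt (verit) mult_nonneg_nonneg)
    have "G c = c powr \<gamma> * (\<alpha>1 + (b2 * c powr (\<mu> - 1) + b3 * c powr (\<sigma> - 1)))"
    proof -
      have e1: "c powr p = c powr \<gamma> * c powr (\<mu> - 1)" unfolding p_def by (simp add: powr_add[symmetric] algebra_simps)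
      have e2: "c powr q = c powr \<gamma> * c powr (\<sigma> - 1)" unfolding q_def by (simp add: powr_add[symmetric] algebra_simps)
      show ?thesis unfolding G_def e1 e2 by (simp add: algebra_simps)
    qed
    also have "\<dots> < c powr \<gamma> * (\<alpha>1 + \<eta>)" using small c(1) by (intro mult_strict_left_mono) auto
    also have "\<dots> = a1 * c powr \<gamma>" unfolding \<eta>_def by simp
    finally show False using le by simp
  qed
  have xinit: "\<And>\<theta>. \<theta> \<in> {-h..0} \<Longrightarrow> x \<theta> = \<phi> \<theta>" and xcont: "continuous_on {-h..} x"
    and xder: "\<And>t. t \<ge> 0 \<Longrightarrow> (x has_vector_derivative
                (f (x t) (x (t - h)) + blinfun_apply (B t) (Q (x t) (x (t - h))))) (at t within {0..})"
    using sol unfolding is_solution_def by auto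
  define vv where "vv = (\<lambda>\<tau>. vfun h f B Q V gV w1 w2 \<gamma> \<mu> \<epsilon> \<tau> (seg x \<tau>))"
  have L1': "\<exists>D. (vv has_real_derivative D) (at t within {0..}) \<and> D \<le> - c0 * norm (x t) powr p"
    if tt: "t \<ge> 0" "hnorm h (seg x t) \<le> \<delta>" for t
  proof -
    obtain D where D: "(vv has_real_derivative D) (at t within {0..})"
      "D \<le> - c0 * norm (x t) powr (\<gamma> + \<mu> - 1) - c1 * norm (x (t - h)) powr (\<gamma> + \<mu> - 1)
                - c2 * integral {-h..0} (\<lambda>\<theta>. norm (x (t + \<theta>)) powr (\<gamma> + \<mu> - 1))"
      using L1[of \<phi> x t] C\<phi> sol tt unfolding vv_def by blast
    have "0 \<le> c1 * norm (x (t - h)) powr (\<gamma> + \<mu> - 1)" using lemma_consts by simp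
    moreover have "0 \<le> c2 * integral {-h..0} (\<lambda>\<theta>. norm (x (t + \<theta>)) powr (\<gamma> + \<mu> - 1))"
      using lemma_consts by (intro mult_nonneg_nonneg int_nonneg') auto
    ultimately have "D \<le> - c0 * norm (x t) powr p" unfolding p_def using D(2) by linarith
    thus ?thesis using D(1) by blast
  qed
  have mono_v: "vv b \<le> vv a" if ab: "0 \<le> a" "a \<le> b" "\<And>t. t \<in> {a..b} \<Longrightarrow> hnorm h (seg x t) \<le> \<delta>" for a b
  proof (rule nonincr[OF that(2)])
    fix s assume s: "s \<in> {a..b}"
    then obtain D where D: "(vv has_real_derivative D) (at s within {0..})" "D \<le> - c0 * norm (x s) powr p"
      using L1'[of s] ab by auto
    have "(vv has_real_derivative D) (at s within {a..b})"
      by (rule has_field_derivative_subset[OF D(1)]) (use ab in auto)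
    moreover have "D \<le> 0"
    proof -
      have "0 \<le> c0 * norm (x s) powr p" using lemma_consts(3) by simp
      thus ?thesis using D(2) by linarith
    qed
    ultimately show "\<exists>D. (vv has_real_derivative D) (at s within {a..b}) \<and> D \<le> 0" by blast
  qed
  have hphi0: "0 \<le> hnorm h \<phi>"
  proof -
    have "norm (\<phi> 0) \<le> hnorm h \<phi>" using hn_ge[OF C\<phi>, of 0] h_pos by simp
    thus ?thesis using norm_ge_zero[of "\<phi> 0"] by linarith
  qed
  have v0: "vv 0 < a1 * \<delta> powr \<gamma>"
  proof -
    have "\<forall>\<theta>\<in>{-h..0}. norm (seg x 0 \<theta>) \<le> hnorm h \<phi>"
    proof
      fix \<theta> :: real assume th: "\<theta> \<in> {-h..0}"
      have "seg x 0 \<theta> = \<phi> \<theta>" unfolding seg_def using xinit[OF th] by simp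
      thus "norm (seg x 0 \<theta>) \<le> hnorm h \<phi>" using hn_ge[OF C\<phi> th] by simp
    qed
    hence "\<bar>vv 0\<bar> \<le> G (hnorm h \<phi>)" unfolding vv_def by (rule VB[OF order_refl hphi0])
    hence "vv 0 \<le> G (hnorm h \<phi>)" by linarith
    also have "\<dots> < G \<Delta>" by (rule Gmono[OF hphi0 h\<phi>])
    finally show ?thesis using GD by simp
  qed
  have seg_cont: "continuous_on {-h..0} (seg x t)" if "t \<ge> 0" for t
    unfolding seg_def
    by (rule continuous_on_compose2[OF xcont, where f="\<lambda>\<theta>. t + \<theta>"]) (use that in \<open>auto intro: continuous_intros\<close>)
  have claim: "norm (x s) < \<delta>" if "s \<ge> -h" for s
  proof (rule ccontr)
    assume ns: "\<not> norm (x s) < \<delta>"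
    define A where "A = {-h..} \<inter> (\<lambda>s. norm (x s)) -` {\<delta>..}"
    have clA: "closed A" unfolding A_def
      by (rule continuous_closed_preimage) (auto intro: continuous_intros xcont)
    have sA: "s \<in> A" using ns that unfolding A_def by auto
    have bA: "bdd_below A" unfolding A_def by (rule bdd_belowI[of _ "-h"]) auto
    define T where "T = Inf A"
    have TA: "T \<in> A" unfolding T_def using closed_contains_Inf[OF _ bA clA] sA by blast
    hence Th: "T \<ge> -h" and Tn: "norm (x T) \<ge> \<delta>" unfolding A_def by auto
    have T0: "T > 0"
    proof (rule ccontr)
      assume "\<not> T > 0"
      hence th: "T \<in> {-h..0}" using Th by auto
      have "norm (x T) \<le> hnorm h \<phi>" using xinit[OF th] hn_ge[OF C\<phi> th] by simp
      thus False using Tn h\<phi> Dd by linarith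
    qed
    have before: "norm (x r) < \<delta>" if "r \<in> {-h..<T}" for r
    proof (rule ccontr)
      assume "\<not> norm (x r) < \<delta>"
      hence "r \<in> A" using that unfolding A_def by auto
      hence "T \<le> r" unfolding T_def using bA by (simp add: cInf_lower)
      thus False using that by auto
    qed
    define B0 where "B0 = {-h..T} \<inter> (\<lambda>s. norm (x s)) -` {..\<delta>}"
    have clB: "closed B0" unfolding B0_def
      by (rule continuous_closed_preimage)
         (auto intro!: continuous_on_norm continuous_on_subset[OF xcont])
    have "{-h..<T} \<subseteq> B0" unfolding B0_def using before by (force intro: less_imp_le)
    hence "closure {-h..<T} \<subseteq> B0" using clB by (rule closure_minimal)
    moreover have "closure {-h..<T} = {-h..T}" using T0 h_pos by (intro closure_atLeastLessThan) auto
    ultimately have "T \<in> B0" using Th by auto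
    hence TD: "norm (x T) = \<delta>" using Tn unfolding B0_def by auto
    have segle: "hnorm h (seg x t) \<le> \<delta>" if "t \<in> {0..T}" for t
    proof (rule hn_le[OF h_pos])
      fix \<theta> :: real assume th: "\<theta> \<in> {-h..0}"
      show "norm (seg x t \<theta>) \<le> \<delta>"
      proof (cases "t + \<theta> < T")
        case True
        then show ?thesis unfolding seg_def using before[of "t + \<theta>"] th that by auto
      next
        case False
        hence "t + \<theta> = T" using th that by auto
        then show ?thesis unfolding seg_def using TD by simp
      qed
    qed
    have vT: "vv T \<le> vv 0" using mono_v[of 0 T] T0 segle by auto
    have inS: "in_S h \<alpha> (seg x T)" unfolding in_S_def Cfun_def
    proof (intro conjI ballI)
      show "continuous_on {-h..0} (seg x T)" using seg_cont T0 by auto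
      fix \<theta> :: real assume th: "\<theta> \<in> {-h..0}"
      have "norm (seg x T \<theta>) \<le> \<delta>" using segle[of T] T0 hn_ge[of h "seg x T" \<theta>] th seg_cont[of T]
        unfolding Cfun_def by auto
      also have "\<dots> \<le> \<alpha> * norm (seg x T 0)" using TD lemma_consts(1,2) unfolding seg_def by simp
      finally show "norm (seg x T \<theta>) \<le> \<alpha> * norm (seg x T 0)" .
    qed
    have "a1 * norm (seg x T 0) powr \<gamma> + w1 * integral {-h..0} (\<lambda>\<theta>. norm (seg x T \<theta>) powr (\<gamma> + \<mu> - 1))
          \<le> vv T" unfolding vv_def using L2[OF _ inS segle] T0 by auto
    moreover have "0 \<le> integral {-h..0} (\<lambda>\<theta>. norm (seg x T \<theta>) powr (\<gamma> + \<mu> - 1))" by (rule int_nonneg') simp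
    moreover have "norm (seg x T 0) = \<delta>" using TD unfolding seg_def by simp
    ultimately have "a1 * \<delta> powr \<gamma> \<le> vv T" using w12(1) by (smt (verit) mult_nonneg_nonneg)
    thus False using vT v0 by linarith
  qed
  have part2: "\<forall>t\<ge>0. hnorm h (seg x t) \<le> \<delta>"
  proof (intro allI impI)
    fix t :: real assume "t \<ge> 0"
    show "hnorm h (seg x t) \<le> \<delta>"
    proof (rule hn_le[OF h_pos])
      fix \<theta> :: real assume "\<theta> \<in> {-h..0}"
      hence "t + \<theta> \<ge> -h" using \<open>t \<ge> 0\<close> by auto
      thus "norm (seg x t \<theta>) \<le> \<delta>" unfolding seg_def using claim[of "t + \<theta>"] by simp
    qed
  qed
  have part1: "(x \<longlongrightarrow> 0) at_top"
  proof -
    define K where "K = (m1 + m2) * \<delta> powr \<mu> + bh * ((p1 + p2) * \<delta> powr \<sigma>)"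
    have K0: "K \<ge> 0" unfolding K_def using f_consts(1,2) Q_consts(1,2) bh0 by simp
    have xdb: "norm (f (x s) (x (s - h)) + blinfun_apply (B s) (Q (x s) (x (s - h)))) \<le> K" if s: "s \<ge> 0" for s
    proof -
      have n1: "norm (x s) \<le> \<delta>" using claim[of s] s h_pos by simp
      have n2: "norm (x (s - h)) \<le> \<delta>" using claim[of "s - h"] s by simp
      have "m1 * norm (x s) powr \<mu> \<le> m1 * \<delta> powr \<mu>" using powr_le_r[OF _ n1, of \<mu>] \<mu>_gt f_consts by (simp add: mult_left_mono)
      moreover have "m2 * norm (x (s - h)) powr \<mu> \<le> m2 * \<delta> powr \<mu>" using powr_le_r[OF _ n2, of \<mu>] \<mu>_gt f_consts by (simp add: mult_left_mono)
      ultimately have fb: "norm (f (x s) (x (s - h))) \<le> (m1 + m2) * \<delta> powr \<mu>"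
        using f_bound[of "x s" "x (s - h)"] by (simp add: algebra_simps)
      have "p1 * norm (x s) powr \<sigma> \<le> p1 * \<delta> powr \<sigma>" using powr_le_r[OF _ n1, of \<sigma>] \<sigma>_gt Q_consts by (simp add: mult_left_mono)
      moreover have "p2 * norm (x (s - h)) powr \<sigma> \<le> p2 * \<delta> powr \<sigma>" using powr_le_r[OF _ n2, of \<sigma>] \<sigma>_gt Q_consts by (simp add: mult_left_mono)
      ultimately have qb: "norm (Q (x s) (x (s - h))) \<le> (p1 + p2) * \<delta> powr \<sigma>"
        using Q_bound[of "x s" "x (s - h)"] by (simp add: algebra_simps)
      have "norm (blinfun_apply (B s) (Q (x s) (x (s - h)))) \<le> norm (B s) * norm (Q (x s) (x (s - h)))"
        by (rule norm_blinfun)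
      also have "\<dots> \<le> bh * ((p1 + p2) * \<delta> powr \<sigma>)"
        apply (rule mult_mono) using B_bound[OF s] qb bh0 by auto
      finally show ?thesis unfolding K_def
        using fb norm_triangle_ineq[of "f (x s) (x (s - h))" "blinfun_apply (B s) (Q (x s) (x (s - h)))"] by linarith
    qed
    have lip: "norm (x b - x a) \<le> K * (b - a)" if ab: "0 \<le> a" "a \<le> b" for a b
    proof -
      have "((\<lambda>s. f (x s) (x (s - h)) + blinfun_apply (B s) (Q (x s) (x (s - h)))) has_integral x b - x a) {a..b}"
      proof (rule fundamental_theorem_of_calculus[OF ab(2)])
        fix s assume s: "s \<in> {a..b}"
        show "(x has_vector_derivative f (x s) (x (s - h)) + blinfun_apply (B s) (Q (x s) (x (s - h)))) (at s within {a..b})"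
          by (rule has_vector_derivative_within_subset[OF xder]) (use s ab in auto)
      qed
      hence "norm (x b - x a) \<le> K * Henstock_Kurzweil_Integration.content {a..b}"
        by (rule has_integral_bound_real[OF K0 finite.emptyI]) (use xdb ab in auto)
      thus ?thesis using ab by simp
    qed
    have vlow: "- G \<delta> \<le> vv t" if t: "t \<ge> 0" for t
    proof -
      have "\<forall>\<theta>\<in>{-h..0}. norm (seg x t \<theta>) \<le> \<delta>"
        unfolding seg_def using claim t by (auto intro: less_imp_le)
      hence "\<bar>vv t\<bar> \<le> G \<delta>" unfolding vv_def by (rule VB[OF t less_imp_le[OF lemma_consts(2)]])
      thus ?thesis by linarith
    qed
    have vmono: "vv b \<le> vv a" if ab: "0 \<le> a" "a \<le> b" for a b
      by (rule mono_v[OF ab]) (use part2 ab in auto)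
    show ?thesis
      unfolding tendsto_iff eventually_at_top_linorder
    proof (intro allI impI)
      fix e :: real assume e: "e > 0"
      show "\<exists>N. \<forall>t\<ge>N. dist (x t) 0 < e"
      proof (rule ccontr)
        assume "\<not> (\<exists>N. \<forall>t\<ge>N. dist (x t) 0 < e)"
        hence big: "\<And>N. \<exists>t\<ge>N. norm (x t) \<ge> e" by (auto simp: not_less)
        define d where "d = e / (2 * (K + 1))"
        have d: "d > 0" unfolding d_def using e K0 by simp
        have Kd: "K * d \<le> e / 2"
        proof -
          have "K * d = (e / 2) * (K / (K + 1))" unfolding d_def using K0 by (simp add: field_simps)
          also have "\<dots> \<le> (e / 2) * 1" using K0 e by (intro mult_left_mono) auto
          finally show ?thesis by simp
        qed
        define C where "C = c0 * (e / 2) powr p"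
        have C: "C > 0" unfolding C_def using lemma_consts(3) e by simp
        have step: "\<exists>t'\<ge>0. vv t' \<le> vv t - C * d" if t: "t \<ge> 0" for t
        proof -
          obtain t' where t': "t' \<ge> t + d" "norm (x t') \<ge> e" using big[of "t + d"] by auto
          define a where "a = t' - d"
          have a: "a \<ge> t" "a \<le> t'" using t' d unfolding a_def by auto
          have xs: "norm (x s) \<ge> e / 2" if s: "s \<in> {a..t'}" for s
          proof -
            have "norm (x t' - x s) \<le> K * (t' - s)" using lip[of s t'] s a t by auto
            also have "\<dots> \<le> K * d" using s K0 unfolding a_def by (intro mult_left_mono) auto
            finally have "norm (x t' - x s) \<le> e / 2" using Kd by linarith
            moreover have "norm (x t') \<le> norm (x s) + norm (x t' - x s)"
              using norm_triangle_ineq[of "x s" "x t' - x s"] by simp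
            ultimately show ?thesis using t' by linarith
          qed
          have "(\<lambda>s. vv s + C * s) t' \<le> (\<lambda>s. vv s + C * s) a"
          proof (rule nonincr[OF a(2)])
            fix s assume s: "s \<in> {a..t'}"
            have s0: "s \<ge> 0" using s a t by auto
            obtain D where D: "(vv has_real_derivative D) (at s within {0..})" "D \<le> - c0 * norm (x s) powr p"
              using L1'[OF s0] part2 s0 by blast
            have "(vv has_real_derivative D) (at s within {a..t'})"
              by (rule has_field_derivative_subset[OF D(1)]) (use a t in auto)
            hence "((\<lambda>s. vv s + C * s) has_real_derivative D + C) (at s within {a..t'})"
              by (auto intro!: derivative_eq_intros)
            moreover have "D + C \<le> 0"
            proof -
              have "(e / 2) powr p \<le> norm (x s) powr p" using xs[OF s] e p_pos by (intro powr_mono2) auto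
              hence "C \<le> c0 * norm (x s) powr p" unfolding C_def using lemma_consts(3) by (simp add: mult_left_mono)
              thus ?thesis using D(2) by linarith
            qed
            ultimately show "\<exists>D. ((\<lambda>s. vv s + C * s) has_real_derivative D) (at s within {a..t'}) \<and> D \<le> 0" by blast
          qed
          hence "vv t' \<le> vv a - C * d" unfolding a_def by (simp add: algebra_simps)
          moreover have "vv a \<le> vv t" using vmono[of t a] t a by auto
          ultimately show ?thesis using t' t d by (intro exI[of _ t']) auto
        qed
        have iter: "\<exists>t\<ge>0. vv t \<le> vv 0 - real n * (C * d)" for n :: nat
        proof (induction n)
          case 0
          then show ?case by (intro exI[of _ 0]) auto
        next
          case (Suc n)
          then obtain t where t: "t \<ge> 0" "vv t \<le> vv 0 - real n * (C * d)" by auto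
          obtain t' where "t' \<ge> 0" "vv t' \<le> vv t - C * d" using step[OF t(1)] by auto
          then show ?case using t by (intro exI[of _ t']) (auto simp: algebra_simps)
        qed
        have "C * d > 0" using C d by simp
        then obtain n :: nat where n: "vv 0 + G \<delta> < real n * (C * d)" using reals_Archimedean3 by blast
        obtain t where "t \<ge> 0" "vv t \<le> vv 0 - real n * (C * d)" using iter[of n] by auto
        thus False using vlow[of t] n by linarith
      qed
    qed
  qed
  show "(x \<longlongrightarrow> 0) at_top \<and> (\<forall>t\<ge>0. hnorm h (seg x t) \<le> \<delta>)" using part1 part2 by blast
qed

end
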